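(* Let $n\ge 2$, $PS$ be strictly proper, and let $k$ be an integer with $1\le k\le k_B$. Let $(\bar\beta_\ell,\bar\beta_h)\in\mathbb R^2$ satisfy $\bar\beta_\ell\ge 0$, $\bar\beta_h\ge 0$ and $\bar\beta_h+\frac{P(\ell\mid h)}{P(h\mid h)}\bar\beta_\ell\le 1$. Then $u(\bar\beta_\ell,\bar\beta_h\mid h)\le u(\Sigma^*\mid h)$, with equality only when $(\bar\beta_\ell,\bar\beta_h)=(0,1)$.
   Context: Peer prediction setting with signals $\{\ell,h\}$ and a symmetric prior. $P(s\mid s')$ denotes the probability that another agent has signal $s$ given that one's own signal is $s'$, and $P_{s'}=P(\cdot\mid s')$. Standing assumptions: $P(h\mid h)>P(h\mid\ell)$, $P(h\mid\ell)>0$ and $P(\ell\mid h)>0$. $PS$ is a strictly proper scoring rule on $\{\ell,h\}$. For $\beta'\in\mathbb R$ and $(\beta_\ell,\beta_h)\in\mathbb R^2$, let $q=P(h\mid h)\beta_h+P(\ell\mid h)\beta_\ell$ and define $$f^h(\beta',(\beta_\ell,\beta_h))=\beta'\big[q\,PS(h,P_h)+(1-q)PS(\ell,P_h)\big]+(1-\beta')\big[q\,PS(h,P_\ell)+(1-q)PS(\ell,P_\ell)\big].$$ Define $$u(\bar\beta_\ell,\bar\beta_h\mid h)=\tfrac{n-k}{n-1}f^h(\bar\beta_h,(0,1))+\tfrac{k-1}{n-1}f^h(\bar\beta_h,(\bar\beta_\ell,\bar\beta_h)).$$ This is the interim utility of a signal-$h$ deviator when $k$ deviators all play $(\bar\beta_\ell,\bar\beta_h)$,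 i.e. report $h$ with probability $\bar\beta_\ell$ given signal $\ell$ and with probability $\bar\beta_h$ given signal $h$, and the remaining $n-k$ agents report truthfully. The truthful interim utility is $u(\Sigma^*\mid h)=P(h\mid h)PS(h,P_h)+P(\ell\mid h)PS(\ell,P_h)$. $k_B=\min(k_B^h,k_B^\ell,n)$, where $k_B^h=\lceil (n-1)\mathbb E_{s\sim P_\ell}[PS(s,P_\ell)-PS(s,P_h)]/(P(\ell\mid\ell)(PS(h,P_h)-PS(\ell,P_h)))\rceil$ if $PS(h,P_h)>PS(\ell,P_h)$ and $k_B^h=n$ otherwise; and $k_B^\ell=\lceil (n-1)\mathbb E_{s\sim P_h}[PS(s,P_h)-PS(s,P_\ell)]/(P(h\mid h)(PS(\ell,P_\ell)-PS(h,P_\ell)))\rceil$ if $PS(\ell,P_\ell)>PS(h,P_\ell)$ and $k_B^\ell=n$ otherwise. *)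

theory Defs
  imports Complex_Main
begin

text \<open>A distribution on {l,h} is encoded by its probability of h (a real in [0,1]).
  Parameters: phh = P(h|h), phl = P(h|l); hence P(l|h) = 1 - phh, P(l|l) = 1 - phl.
  P_h is encoded by phh, P_l by phl.\<close>

datatype signal = Lo | Hi

definition strictly_proper :: "(signal \<Rightarrow> real \<Rightarrow> real) \<Rightarrow> bool" where
  "strictly_proper PS \<longleftrightarrow>
     (\<forall>p q. 0 \<le> p \<and> p \<le> 1 \<and> 0 \<le> q \<and> q \<le> 1 \<and> q \<noteq> p \<longrightarrow>
        p * PS Hi q + (1 - p) * PS Lo q < p * PS Hi p + (1 - p) * PS Lo p)"

definition fh :: "(signal \<Rightarrow> real \<Rightarrow> real) \<Rightarrow> real \<Rightarrow> real \<Rightarrow> real \<Rightarrow> real \<Rightarrow> real \<Rightarrow> real" where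
  "fh PS phh phl b' bl bh =
     (let q = phh * bh + (1 - phh) * bl in
        b' * (q * PS Hi phh + (1 - q) * PS Lo phh)
      + (1 - b') * (q * PS Hi phl + (1 - q) * PS Lo phl))"

definition u_dev_h :: "(signal \<Rightarrow> real \<Rightarrow> real) \<Rightarrow> real \<Rightarrow> real \<Rightarrow> nat \<Rightarrow> nat \<Rightarrow> real \<Rightarrow> real \<Rightarrow> real" where
  "u_dev_h PS phh phl n k bl bh =
     real (n - k) / real (n - 1) * fh PS phh phl bh 0 1
   + real (k - 1) / real (n - 1) * fh PS phh phl bh bl bh"

definition u_truth_h :: "(signal \<Rightarrow> real \<Rightarrow> real) \<Rightarrow> real \<Rightarrow> real" where
  "u_truth_h PS phh = phh * PS Hi phh + (1 - phh) * PS Lo phh"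

definition kB_h :: "(signal \<Rightarrow> real \<Rightarrow> real) \<Rightarrow> real \<Rightarrow> real \<Rightarrow> nat \<Rightarrow> int" where
  "kB_h PS phh phl n =
     (if PS Hi phh > PS Lo phh then
        \<lceil>real (n - 1) * (phl * (PS Hi phl - PS Hi phh) + (1 - phl) * (PS Lo phl - PS Lo phh))
          / ((1 - phl) * (PS Hi phh - PS Lo phh))\<rceil>
      else int n)"

definition kB_l :: "(signal \<Rightarrow> real \<Rightarrow> real) \<Rightarrow> real \<Rightarrow> real \<Rightarrow> nat \<Rightarrow> int" where
  "kB_l PS phh phl n =
     (if PS Lo phl > PS Hi phl then
        \<lceil>real (n - 1) * (phh * (PS Hi phh - PS Hi phl) + (1 - phh) * (PS Lo phh - PS Lo phl))
          / (phh * (PS Lo phl - PS Hi phl))\<rceil>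
      else int n)"

definition kB :: "(signal \<Rightarrow> real \<Rightarrow> real) \<Rightarrow> real \<Rightarrow> real \<Rightarrow> nat \<Rightarrow> int" where
  "kB PS phh phl n = min (kB_h PS phh phl n) (min (kB_l PS phh phl n) (int n))"

end

theory Submission
  imports Defs
begin

theorem lemma1:
  fixes PS :: "signal \<Rightarrow> real \<Rightarrow> real" and phh phl bl bh :: real and n k :: nat
  assumes "phh \<le> 1" and "phl \<le> 1"
    and "phh > phl" and "phl > 0" and "1 - phh > 0"
    and "n \<ge> 2" and "strictly_proper PS"
    and "1 \<le> k" and "int k \<le> kB PS phh phl n"
    and "bl \<ge> 0" and "bh \<ge> 0" and "bh + (1 - phh) / phh * bl \<le> 1"
  shows "u_dev_h PS phh phl n k bl bh \<le> u_truth_h PS phh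
       \<and> (u_dev_h PS phh phl n k bl bh = u_truth_h PS phh \<longrightarrow> (bl, bh) = (0, 1))"
proof -
  define a where "a = phh"
  define b where "b = phl"
  define A where "A = PS Hi phh"
  define B where "B = PS Lo phh"
  define C where "C = PS Hi phl"
  define D where "D = PS Lo phl"
  have a0: "0 < a" "a < 1" "b < a" "0 < b" using assms unfolding a_def b_def by auto
  have sp1: "a*C+(1-a)*D < a*A+(1-a)*B"
    using assms(7) a0 unfolding strictly_proper_def a_def b_def A_def B_def C_def D_def
    by (elim allE[of _ phh] allE[of _ phl]) auto
  have sp2: "b*A+(1-b)*B < b*C+(1-b)*D"
    using assms(7) a0 unfolding strictly_proper_def a_def b_def A_def B_def C_def D_def
    by (elim allE[of _ phl] allE[of _ phh]) auto
  define Del where "Del = a*(A-C)+(1-a)*(B-D)"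
  have Delp: "Del > 0" using sp1 unfolding Del_def by (simp add: algebra_simps)
  have "(a-b)*(C-D) < (a-b)*(A-B)" using sp1 sp2 by (simp add: algebra_simps)
  hence XD: "C - D < A - B" using a0 by (simp add: mult_less_cancel_left)
  have kle: "int k \<le> kB_l PS phh phl n" "int k \<le> int n"
    using assms(9) unfolding kB_def by auto
  have kn: "k \<le> n" using kle by simp
  have n1: "real n - 1 > 0" using assms(6) by simp
  define r where "r = (real k - 1) / (real n - 1)"
  have r0: "r \<ge> 0" using assms(8) n1 unfolding r_def by simp
  have e1: "real (n - k) / real (n - 1) = 1 - r"
    using kn n1 assms(6) unfolding r_def by (simp add: of_nat_diff field_simps)
  have e2: "real (k - 1) / real (n - 1) = r"
    using assms(8) assms(6) unfolding r_def by (simp add: of_nat_diff)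
  define d where "d = a*(1-bh)-(1-a)*bl"
  define X where "X = bh*(A-B)+(1-bh)*(C-D)"
  define T where "T = a*A+(1-a)*B"
  have uT: "u_truth_h PS phh = T" unfolding u_truth_h_def T_def a_def A_def B_def by simp
  have ueq: "u_dev_h PS phh phl n k bl bh = T - (1-bh)*Del - r*d*X"
    unfolding u_dev_h_def fh_def Let_def e1 e2
    unfolding T_def Del_def d_def X_def a_def A_def B_def C_def D_def
    by (simp add: algebra_simps)
  have "a*bh + (1-a)*bl \<le> a"
  proof -
    have "a*(bh + (1 - a) / a * bl) \<le> a*1" using assms(12) a0 unfolding a_def
      by (intro mult_left_mono) auto
    moreover have "a*(bh + (1 - a) / a * bl) = a*bh + (1-a)*bl" using a0 by (simp add: field_simps)
    ultimately show ?thesis by simp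
  qed
  hence d0: "d \<ge> 0" unfolding d_def by (simp add: algebra_simps)
  have da: "d \<le> a*(1-bh)" unfolding d_def using assms(10) a0 by simp
  have "0 \<le> a*(1-bh)" using d0 da by linarith
  hence bh1: "bh \<le> 1" using a0 by (simp add: zero_le_mult_iff)
  have XC: "X \<ge> C - D"
  proof -
    have "X - (C-D) = bh*((A-B)-(C-D))" unfolding X_def by (simp add: algebra_simps)
    moreover have "bh*((A-B)-(C-D)) \<ge> 0" using assms(11) XD by simp
    ultimately show ?thesis by simp
  qed
  have key: "r*d*X \<ge> - (1-bh)*Del \<and> (bh < 1 \<longrightarrow> r*d*X > - (1-bh)*Del)"
  proof (cases "D \<le> C")
    case True
    hence "X \<ge> 0" using XC by simp
    hence "r*d*X \<ge> 0" using r0 d0 by simp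
    moreover have "bh < 1 \<longrightarrow> (1-bh)*Del > 0" using Delp by simp
    moreover have "(1-bh)*Del \<ge> 0" using Delp bh1 by simp
    ultimately show ?thesis by linarith
  next
    case False
    hence DC: "D - C > 0" by simp
    have "kB_l PS phh phl n = \<lceil>real (n - 1) * Del / (a * (D - C))\<rceil>"
      using False unfolding kB_l_def Del_def a_def A_def B_def C_def D_def by simp
    hence "int k \<le> \<lceil>real (n - 1) * Del / (a * (D - C))\<rceil>" using kle by simp
    hence "real k - 1 < real (n - 1) * Del / (a * (D - C))"
      by (simp add: le_ceiling_iff)
    hence "(real k - 1) * (a*(D-C)) < real (n - 1) * Del"
      using a0 DC by (simp add: pos_less_divide_eq)
    hence "r * (a*(D-C)) < Del" using n1 assms(6) unfolding r_def
      by (simp add: of_nat_diff field_simps)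
    hence rl: "r * a * (D-C) < Del" by (simp add: mult.assoc)
    have "r*d*(-X) \<le> r*d*(D-C)" using XC r0 d0 by (intro mult_left_mono) auto
    also have "\<dots> \<le> r*(a*(1-bh))*(D-C)" using da r0 DC
      by (intro mult_right_mono mult_left_mono) auto
    also have "\<dots> = (1-bh)*(r*a*(D-C))" by (simp add: algebra_simps)
    finally have h: "r*d*(-X) \<le> (1-bh)*(r*a*(D-C))" .
    have "(1-bh)*(r*a*(D-C)) \<le> (1-bh)*Del" using rl bh1 by (intro mult_left_mono) auto
    moreover have "bh < 1 \<longrightarrow> (1-bh)*(r*a*(D-C)) < (1-bh)*Del" using rl by simp
    ultimately show ?thesis using h by (simp add: algebra_simps) linarith
  qed
  show ?thesis
  proof (cases "bh < 1")
    case True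
    hence "r*d*X > - (1-bh)*Del" using key by blast
    hence "u_dev_h PS phh phl n k bl bh < u_truth_h PS phh" unfolding ueq uT by linarith
    thus ?thesis by simp
  next
    case False
    hence bh: "bh = 1" using bh1 by simp
    hence "d = -(1-a)*bl" unfolding d_def by (simp add: algebra_simps)
    hence "(1-a)*bl \<le> 0" using d0 by linarith
    hence "bl \<le> 0" using a0 by (simp add: mult_le_0_iff)
    hence "bl = 0" using assms(10) by simp
    hence "d = 0" using bh unfolding d_def by simp
    thus ?thesis using ueq uT bh \<open>bl = 0\<close> by simp
  qed
qed

end
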